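(* Fix integers/reals $d\ge1$, $L\ge1$ and $q>d$. Then $\Phi(\mathcal{H}_L)\le C_{d,q}L^d$ for a finite constant $C_{d,q}$ depending only on $(d,q)$, and consequently $\mathbb{D}_{\mathrm{onl}}(\mathcal{H}_L)\le 4\cdot 2^{q-1}C_{d,q}L^d$.
   Context: $\mathcal{X}=[-1,1]^d$, $\mathcal{Y}=[0,1]$, $\mathcal{H}_L=\{h:\mathcal X\to[0,1]: |h(x)-h(x')|\le L\|x-x'\|_\infty\ \forall x,x'\}$. Loss $\ell_q(y,y')=|y-y'|^q$ ($q\ge1$), which is a $2^{q-1}$-approximate pseudo-metric; the induced metric is $d_\ell(f,g)=\sup_x\ell_q(f(x),g(x))=\|f-g\|_\infty^q$. $N(U,\varepsilon)$ is the minimal size of $S\subseteq\mathcal{H}_L$ with every $u\in U$ within $d_\ell$-distance $\le\varepsilon$ of $S$; $\Phi(U)=\int_0^{\operatorname{diam}(\mathcal{H}_L)}\log_2 N(U,\varepsilon)d\varepsilon$ where $\operatorname{diam}(\mathcal{H}_L)=\sup_{f,g}d_\ell(f,g)$. Online dimension $\mathbb{D}_{\mathrm{onl}}$: for scaled Littlestone trees (internal nodes $u\in\{0,1\}^{<D}$ labeled $x_u\in\mathcal X$, edges labeled $s_{u,0},s_{u,1}\in\mathcal Y$, gap $\gamma_u=\ell_q(s_{u,0},s_{u,1})$) realizable by $\mathcal{H}_L$ (every finite prefix of every branch consistent with some $h\in\mathcal H_L$, i.e. $h(x_{b_{\le t}})=s_{b_{\le t},b_{t+1}}$), $\mathbb{D}_{\mathrm{onl}}(\mathcal{H}_L)=\sup_{\mathcal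 T}\inf_b\sum_t\gamma_{b_{\le t}}$. *)

theory Defs
  imports "HOL-Analysis.Analysis" "HOL-Library.Extended_Nat"
begin

text \<open>Points of X = [-1,1]^d are represented as functions nat => real that lie in
  [-1,1] on the coordinates i < d and vanish on the coordinates i >= d.\<close>
definition cubeX :: "nat \<Rightarrow> (nat \<Rightarrow> real) set" where
  "cubeX d = {x. (\<forall>i<d. x i \<in> {-1..1}) \<and> (\<forall>i\<ge>d. x i = 0)}"

definition linf :: "nat \<Rightarrow> (nat \<Rightarrow> real) \<Rightarrow> (nat \<Rightarrow> real) \<Rightarrow> real" where
  "linf d x y = (MAX i\<in>{..<d}. \<bar>x i - y i\<bar>)"

definition HL :: "nat \<Rightarrow> real \<Rightarrow> ((nat \<Rightarrow> real) \<Rightarrow> real) set" where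
  "HL d L = {h. (\<forall>x\<in>cubeX d. h x \<in> {0..1})
              \<and> (\<forall>x\<in>cubeX d. \<forall>x'\<in>cubeX d. \<bar>h x - h x'\<bar> \<le> L * linf d x x')
              \<and> (\<forall>x. x \<notin> cubeX d \<longrightarrow> h x = 0)}"

definition lossq :: "real \<Rightarrow> real \<Rightarrow> real \<Rightarrow> real" where
  "lossq q y y' = \<bar>y - y'\<bar> powr q"

definition dl :: "nat \<Rightarrow> real \<Rightarrow> ((nat \<Rightarrow> real) \<Rightarrow> real) \<Rightarrow> ((nat \<Rightarrow> real) \<Rightarrow> real) \<Rightarrow> real" where
  "dl d q f g = (SUP x\<in>cubeX d. lossq q (f x) (g x))"

definition diamH :: "nat \<Rightarrow> real \<Rightarrow> real \<Rightarrow> real" where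
  "diamH d q L = (SUP fg\<in>HL d L \<times> HL d L. dl d q (fst fg) (snd fg))"

text \<open>covering number N(U, eps) with centers in H_L (infinite if no finite cover exists)\<close>
definition covnum :: "nat \<Rightarrow> real \<Rightarrow> real \<Rightarrow> ((nat \<Rightarrow> real) \<Rightarrow> real) set \<Rightarrow> real \<Rightarrow> ennreal" where
  "covnum d q L U eps = (INF S\<in>{S. finite S \<and> S \<subseteq> HL d L \<and> (\<forall>u\<in>U. \<exists>s\<in>S. dl d q u s \<le> eps)}.
                           of_nat (card S))"

definition log2N :: "ennreal \<Rightarrow> ennreal" where
  "log2N n = (if n = \<infinity> then \<infinity> else ennreal (log 2 (enn2real n)))"

definition Phi :: "nat \<Rightarrow> real \<Rightarrow> real \<Rightarrow> ((nat \<Rightarrow> real) \<Rightarrow> real) set \<Rightarrow> ennreal" where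
  "Phi d q L U = (\<integral>\<^sup>+ eps\<in>{0..diamH d q L}. log2N (covnum d q L U eps) \<partial>lborel)"

text \<open>Scaled Littlestone tree of depth D (possibly infinite): internal nodes are bool lists u
  of length < D, labelled by xl u in X; edges (u,b) labelled by sl u b in Y = [0,1].\<close>
definition realizable_tree ::
  "nat \<Rightarrow> real \<Rightarrow> enat \<Rightarrow> (bool list \<Rightarrow> (nat \<Rightarrow> real)) \<Rightarrow> (bool list \<Rightarrow> bool \<Rightarrow> real) \<Rightarrow> bool" where
  "realizable_tree d L D xl sl \<longleftrightarrow>
     (\<forall>u. enat (length u) < D \<longrightarrow> xl u \<in> cubeX d \<and> sl u False \<in> {0..1} \<and> sl u True \<in> {0..1})
   \<and> (\<forall>b::nat \<Rightarrow> bool. \<forall>n::nat. enat n \<le> D \<longrightarrow>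
        (\<exists>h\<in>HL d L. \<forall>t<n. h (xl (map b [0..<t])) = sl (map b [0..<t]) (b t)))"

definition branch_gap ::
  "real \<Rightarrow> enat \<Rightarrow> (bool list \<Rightarrow> bool \<Rightarrow> real) \<Rightarrow> (nat \<Rightarrow> bool) \<Rightarrow> ennreal" where
  "branch_gap q D sl b =
     (\<Sum>t. if enat t < D then ennreal (lossq q (sl (map b [0..<t]) False) (sl (map b [0..<t]) True)) else 0)"

definition Donl :: "nat \<Rightarrow> real \<Rightarrow> real \<Rightarrow> ennreal" where
  "Donl d q L = (SUP T\<in>{(D, xl, sl). realizable_tree d L D xl sl}.
                   (case T of (D, xl, sl) \<Rightarrow> (INF b. branch_gap q D sl b)))"

end

theory Submission
  imports Defs
begin

lemma zero_cubeX: "(\<lambda>_. 0) \<in> cubeX d"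
  by (simp add: cubeX_def)

lemma cubeX_ne: "cubeX d \<noteq> {}"
  using zero_cubeX by blast

lemma HL_vals: "h \<in> HL d L \<Longrightarrow> x \<in> cubeX d \<Longrightarrow> 0 \<le> h x \<and> h x \<le> 1"
  by (auto simp: HL_def)

lemma lossq_nonneg: "0 \<le> lossq q a b"
  by (simp add: lossq_def)

lemma lossq_le1:
  assumes "0 \<le> a" "a \<le> 1" "0 \<le> b" "b \<le> 1" "q > 0"
  shows "lossq q a b \<le> 1"
proof -
  have "\<bar>a - b\<bar> \<le> 1" using assms by auto
  then have "\<bar>a - b\<bar> powr q \<le> 1 powr q"
    by (intro powr_mono2) (use assms in auto)
  then show ?thesis by (simp add: lossq_def)
qed

lemma dl_ge:
  assumes "f \<in> HL d L" "g \<in> HL d L" "x \<in> cubeX d" "q > 0"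
  shows "lossq q (f x) (g x) \<le> dl d q f g"
  unfolding dl_def
proof (rule cSUP_upper)
  show "x \<in> cubeX d" by fact
  show "bdd_above ((\<lambda>x. lossq q (f x) (g x)) ` cubeX d)"
    by (rule bdd_aboveI2[where M=1]) (use assms HL_vals lossq_le1 in metis)
qed

lemma dl_le:
  assumes "\<And>x. x \<in> cubeX d \<Longrightarrow> lossq q (f x) (g x) \<le> e"
  shows "dl d q f g \<le> e"
  unfolding dl_def by (rule cSUP_least) (use assms cubeX_ne in auto)

lemma dl_le1:
  assumes "f \<in> HL d L" "g \<in> HL d L" "q > 0"
  shows "dl d q f g \<le> 1"
  by (rule dl_le) (use assms HL_vals lossq_le1 in metis)

lemma linf_nonneg: "d \<ge> 1 \<Longrightarrow> 0 \<le> linf d x y"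
  unfolding linf_def
  by (rule order.trans[OF _ Max_ge[where x="\<bar>x 0 - y 0\<bar>"]]) auto

lemma zero_HL: "d \<ge> 1 \<Longrightarrow> L \<ge> 0 \<Longrightarrow> (\<lambda>_. 0) \<in> HL d L"
proof -
  assume "L \<ge> 0" "d \<ge> 1"
  have "0 \<le> linf d x y" for x y
    using linf_nonneg[OF \<open>d \<ge> 1\<close>] .
  then show ?thesis using \<open>L \<ge> 0\<close> by (auto simp: HL_def)
qed

lemma one_HL: "d \<ge> 1 \<Longrightarrow> L \<ge> 0 \<Longrightarrow> indicator (cubeX d) \<in> HL d L"
proof -
  assume "L \<ge> 0" "d \<ge> 1"
  have "0 \<le> linf d x y" for x y
    using linf_nonneg[OF \<open>d \<ge> 1\<close>] .
  then show ?thesis using \<open>L \<ge> 0\<close> by (auto simp: HL_def indicator_def)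
qed

lemma diamH_eq:
  assumes "d \<ge> 1" "L \<ge> 0" "q > 0"
  shows "diamH d q L = 1"
  unfolding diamH_def
proof (rule antisym)
  show "(SUP fg\<in>HL d L \<times> HL d L. dl d q (fst fg) (snd fg)) \<le> 1"
  proof (rule cSUP_least)
    show "HL d L \<times> HL d L \<noteq> {}" using zero_HL[OF assms(1,2)] by blast
  qed (use assms dl_le1 in auto)
  have "lossq q (indicator (cubeX d) (\<lambda>_. 0)) ((\<lambda>_. 0) (\<lambda>_. 0::real)) \<le> dl d q (indicator (cubeX d)) (\<lambda>_. 0)"
    by (rule dl_ge) (use assms zero_HL one_HL zero_cubeX in auto)
  then have "1 \<le> dl d q (indicator (cubeX d)) (\<lambda>_. 0)"
    using zero_cubeX by (simp add: lossq_def)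
  also have "\<dots> \<le> (SUP fg\<in>HL d L \<times> HL d L. dl d q (fst fg) (snd fg))"
    by (rule cSUP_upper2[where x="(indicator (cubeX d), \<lambda>_. 0)"])
       (use assms zero_HL one_HL dl_le1 in \<open>auto intro!: bdd_aboveI2[where M=1]\<close>)
  finally show "1 \<le> (SUP fg\<in>HL d L \<times> HL d L. dl d q (fst fg) (snd fg))" .
qed


definition iscov where
  "iscov d q L U e S \<longleftrightarrow> finite S \<and> S \<subseteq> HL d L \<and> (\<forall>u\<in>U. \<exists>s\<in>S. dl d q u s \<le> e)"

lemma covnum_def': "covnum d q L U e = (INF S\<in>{S. iscov d q L U e S}. of_nat (card S))"
  unfolding covnum_def iscov_def by simp

lemma covnum_le: "iscov d q L U e S \<Longrightarrow> covnum d q L U e \<le> of_nat (card S)"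
  unfolding covnum_def' by (rule INF_lower) simp

lemma covnum_attained:
  assumes "covnum d q L U e \<noteq> \<infinity>"
  shows "\<exists>S. iscov d q L U e S \<and> covnum d q L U e = of_nat (card S)"
proof -
  let ?A = "{S. iscov d q L U e S}"
  have ne: "?A \<noteq> {}"
  proof
    assume "?A = {}"
    then have "covnum d q L U e = top" unfolding covnum_def' by simp
    then show False using assms by simp
  qed
  define n where "n = (LEAST n. \<exists>S\<in>?A. card S = n)"
  obtain S0 where "S0 \<in> ?A" using ne by blast
  then have ex: "\<exists>S\<in>?A. card S = card S0" by blast
  have n1: "\<exists>S\<in>?A. card S = n" unfolding n_def by (rule LeastI_ex) (use ex in blast)
  have n2: "n \<le> card S" if "S \<in> ?A" for S unfolding n_def by (rule Least_le) (use that in blast)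
  obtain S where S: "S \<in> ?A" "card S = n" using n1 by blast
  have "covnum d q L U e = of_nat n"
  proof (rule antisym)
    show "covnum d q L U e \<le> of_nat n" using covnum_le[of d q L U e S] S by simp
    show "of_nat n \<le> covnum d q L U e" unfolding covnum_def'
      by (rule INF_greatest) (use n2 in simp)
  qed
  then show ?thesis using S by auto
qed

lemma covnum_mono: "U \<subseteq> U' \<Longrightarrow> covnum d q L U e \<le> covnum d q L U' e"
  unfolding covnum_def' by (rule INF_superset_mono) (auto simp: iscov_def subset_iff)

lemma covnum_anti: "e \<le> e' \<Longrightarrow> covnum d q L U e' \<le> covnum d q L U e"
  unfolding covnum_def' by (rule INF_superset_mono) (auto simp: iscov_def subset_iff, meson order_trans)

lemma covnum_ge1: "U \<noteq> {} \<Longrightarrow> 1 \<le> covnum d q L U e"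
  unfolding covnum_def'
proof (rule INF_greatest)
  fix S assume "U \<noteq> {}" "S \<in> {S. iscov d q L U e S}"
  then have "S \<noteq> {}" "finite S" by (auto simp: iscov_def)
  then show "1 \<le> (of_nat (card S) :: ennreal)"
    by (simp add: Suc_leI card_gt_0_iff)
qed

lemma log2N_mono:
  assumes "a \<le> b"
  shows "log2N a \<le> log2N b"
proof (cases "b = \<infinity>")
  case True then show ?thesis by (simp add: log2N_def)
next
  case False
  then have "a \<noteq> \<infinity>" using assms top.extremum_unique by auto
  have ab: "enn2real a \<le> enn2real b" using assms False by (simp add: enn2real_mono top.not_eq_extremum)
  show ?thesis
  proof (cases "enn2real a = 0")
    case True then show ?thesis using \<open>a \<noteq> \<infinity>\<close> False by (simp add: log2N_def log_def)
  next
    case F: False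
    then have "enn2real a > 0" by (simp add: order_less_le)
    then have "log 2 (enn2real a) \<le> log 2 (enn2real b)" using ab by simp
    then show ?thesis using \<open>a \<noteq> \<infinity>\<close> False by (simp add: log2N_def ennreal_leI)
  qed
qed

lemma log2N_of_nat: "log2N (of_nat n) = ennreal (log 2 (real n))"
  by (simp add: log2N_def)

lemma downset_borel:
  fixes D :: "real set"
  assumes down: "\<And>x y. x \<le> y \<Longrightarrow> y \<in> D \<Longrightarrow> x \<in> D"
  shows "D \<in> sets borel"
proof (cases "D = {}")
  case True then show ?thesis by simp
next
  case ne: False
  show ?thesis
  proof (cases "bdd_above D")
    case False
    have "D = UNIV"
    proof -
      { fix z
      from False obtain w where "w \<in> D" "z < w" unfolding bdd_above_def by (meson not_le)
      then have "z \<in> D" using down[of z w] by simp }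
      then show ?thesis by blast
    qed
    then show ?thesis by simp
  next
    case True
    show ?thesis
    proof (cases "Sup D \<in> D")
      case True
      have "D = {..Sup D}"
      proof safe
        fix x assume "x \<in> D" then show "x \<le> Sup D" using \<open>bdd_above D\<close> by (simp add: cSup_upper)
      next
        fix x assume "x \<le> Sup D" then show "x \<in> D" using down True by blast
      qed
      then show ?thesis by (metis atMost_borel)
    next
      case False
      have "D = {..<Sup D}"
      proof safe
        fix x assume "x \<in> D" then show "x < Sup D" using \<open>bdd_above D\<close> False
          by (metis cSup_upper order_less_le)
      next
        fix x assume "x < Sup D"
        then obtain w where "w \<in> D" "x < w" using less_cSup_iff[OF ne \<open>bdd_above D\<close>] by blast
        then show "x \<in> D" using down[of x w] by simp
      qed
      then show ?thesis by (metis lessThan_borel)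
    qed
  qed
qed

lemma antimono_borel:
  fixes F :: "real \<Rightarrow> ennreal"
  assumes "\<And>x y. x \<le> y \<Longrightarrow> F y \<le> F x"
  shows "F \<in> borel_measurable borel"
proof (rule borel_measurableI_greater)
  fix y
  have "{x. y < F x} \<in> sets borel"
    by (rule downset_borel) (use assms in \<open>auto intro: order.strict_trans2\<close>)
  then show "{x \<in> space borel. y < F x} \<in> sets borel" by simp
qed

lemma covlog_borel: "(\<lambda>e. log2N (covnum d q L U e)) \<in> borel_measurable borel"
  by (rule antimono_borel) (intro log2N_mono covnum_anti)


lemma log_ineq:
  fixes a b N :: real
  assumes "1 \<le> a" "1 \<le> b" "a + b \<le> N"
  shows "log 2 a + log 2 b + 2 \<le> 2 * log 2 N"
proof -
  have "log 2 a + log 2 b + 2 = log 2 (4 * a * b)"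
  proof -
    have l4: "log 2 4 = (2::real)" using log_pow_cancel[of 2 2] by simp
    have "log 2 (4 * a * b) = log 2 4 + log 2 a + log 2 b" using assms by (simp add: log_mult)
    then show ?thesis using l4 by simp
  qed
  also have "4 * a * b \<le> N ^ 2"
  proof -
    have "(a + b) ^ 2 - 4 * a * b = (a - b) ^ 2" by (simp add: power2_eq_square algebra_simps)
    then have "4 * a * b \<le> (a + b) ^ 2" using zero_le_power2[of "a - b"] by linarith
    also have "\<dots> \<le> N ^ 2" using assms by (intro power_mono) auto
    finally show ?thesis .
  qed
  then have "log 2 (4 * a * b) \<le> log 2 (N ^ 2)" using assms by (subst log_le_cancel_iff) auto
  also have "\<dots> = 2 * log 2 N" using assms by (simp add: log_nat_power)
  finally show ?thesis .
qed

lemma separation: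
  assumes "u0 \<in> HL d L" "u1 \<in> HL d L" "s \<in> HL d L" "x \<in> cubeX d" "q > 0"
    and "dl d q u0 s \<le> e" "dl d q u1 s \<le> e"
  shows "lossq q (u0 x) (u1 x) \<le> 2 powr q * e"
proof -
  have a: "\<bar>u0 x - s x\<bar> powr q \<le> e" using dl_ge[of u0 d L s x q] assms by (simp add: lossq_def)
  have b: "\<bar>u1 x - s x\<bar> powr q \<le> e" using dl_ge[of u1 d L s x q] assms by (simp add: lossq_def)
  define m where "m = max \<bar>u0 x - s x\<bar> \<bar>u1 x - s x\<bar>"
  have mq: "m powr q \<le> e" using a b by (simp add: m_def max_def)
  have t: "\<bar>u0 x - u1 x\<bar> \<le> \<bar>u0 x - s x\<bar> + \<bar>u1 x - s x\<bar>"
    using abs_triangle_ineq[of "u0 x - s x" "s x - u1 x"] abs_minus_commute[of "s x" "u1 x"] by simp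
  have "\<bar>u0 x - u1 x\<bar> \<le> 2 * m"
  proof -
    have "\<bar>u0 x - s x\<bar> \<le> m" "\<bar>u1 x - s x\<bar> \<le> m" by (simp_all add: m_def)
    then show ?thesis using t by linarith
  qed
  then have "\<bar>u0 x - u1 x\<bar> powr q \<le> (2 * m) powr q" by (intro powr_mono2) (use assms in auto)
  also have "\<dots> = 2 powr q * m powr q" by (simp add: m_def powr_mult)
  also have "\<dots> \<le> 2 powr q * e" using mq by simp
  finally show ?thesis by (simp add: lossq_def)
qed

lemma split_pointwise_main:
  assumes sub: "V0 \<subseteq> V" "V1 \<subseteq> V" "V \<subseteq> HL d L" and ne: "f0 \<in> V0" "f1 \<in> V1"
    and x: "x \<in> cubeX d" and v0: "\<forall>h\<in>V0. h x = s0" and v1: "\<forall>h\<in>V1. h x = s1"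
    and q: "q > 0" and gap: "2 powr q * e < lossq q s0 s1"
  shows "log2N (covnum d q L V0 e) + log2N (covnum d q L V1 e) + 2 \<le> 2 * log2N (covnum d q L V e)"
proof (cases "covnum d q L V e = \<infinity>")
  case True then show ?thesis by (simp add: log2N_def ennreal_mult_top)
next
  case False
  then obtain S where S: "iscov d q L V e S" "covnum d q L V e = of_nat (card S)"
    using covnum_attained by blast
  define S0 where "S0 = {s\<in>S. \<exists>u\<in>V0. dl d q u s \<le> e}"
  define S1 where "S1 = {s\<in>S. \<exists>u\<in>V1. dl d q u s \<le> e}"
  have fin: "finite S" and SH: "S \<subseteq> HL d L" and cov: "\<forall>u\<in>V. \<exists>s\<in>S. dl d q u s \<le> e"
    using S(1) by (auto simp: iscov_def)
  have f0: "finite S0" "S0 \<subseteq> S" and f1: "finite S1" "S1 \<subseteq> S"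
    using fin by (auto simp: S0_def S1_def)
  have c0: "iscov d q L V0 e S0" unfolding iscov_def
  proof (intro conjI ballI)
    fix u assume "u \<in> V0"
    then obtain s where "s \<in> S" "dl d q u s \<le> e" using cov sub by blast
    then show "\<exists>s\<in>S0. dl d q u s \<le> e" using \<open>u \<in> V0\<close> unfolding S0_def by blast
  qed (use f0 SH in auto)
  have c1: "iscov d q L V1 e S1" unfolding iscov_def
  proof (intro conjI ballI)
    fix u assume "u \<in> V1"
    then obtain s where "s \<in> S" "dl d q u s \<le> e" using cov sub by blast
    then show "\<exists>s\<in>S1. dl d q u s \<le> e" using \<open>u \<in> V1\<close> unfolding S1_def by blast
  qed (use f1 SH in auto)
  have disj: "S0 \<inter> S1 = {}"
  proof (rule ccontr)
    assume "S0 \<inter> S1 \<noteq> {}"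
    then obtain s u0 u1 where "s \<in> S" "u0 \<in> V0" "u1 \<in> V1" "dl d q u0 s \<le> e" "dl d q u1 s \<le> e"
      unfolding S0_def S1_def by blast
    then have "lossq q (u0 x) (u1 x) \<le> 2 powr q * e"
      using separation[of u0 d L u1 s x q e] SH sub x q by blast
    then show False using v0 v1 gap \<open>u0 \<in> V0\<close> \<open>u1 \<in> V1\<close> by auto
  qed
  have card: "card S0 + card S1 \<le> card S"
  proof -
    have "card S0 + card S1 = card (S0 \<union> S1)" using card_Un_disjoint[OF f0(1) f1(1) disj] by simp
    also have "\<dots> \<le> card S" using f0 f1 fin by (intro card_mono) auto
    finally show ?thesis .
  qed
  define a where "a = covnum d q L V0 e"
  define b where "b = covnum d q L V1 e"
  have a1: "1 \<le> a" unfolding a_def using ne by (intro covnum_ge1) blast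
  have b1: "1 \<le> b" unfolding b_def using ne by (intro covnum_ge1) blast
  have a2: "a \<le> of_nat (card S0)" unfolding a_def by (rule covnum_le[OF c0])
  have b2: "b \<le> of_nat (card S1)" unfolding b_def by (rule covnum_le[OF c1])
  have ainf: "a \<noteq> \<infinity>" using a2 by (metis ennreal_of_nat_neq_top infinity_ennreal_def top.extremum_unique)
  have binf: "b \<noteq> \<infinity>" using b2 by (metis ennreal_of_nat_neq_top infinity_ennreal_def top.extremum_unique)
  have ra1: "1 \<le> enn2real a" using enn2real_mono[of 1 a] a1 ainf by (simp add: less_top[symmetric])
  have rb1: "1 \<le> enn2real b" using enn2real_mono[of 1 b] b1 binf by (simp add: less_top[symmetric])
  have ra2: "enn2real a \<le> card S0" using enn2real_mono[OF a2] by (simp add: less_top[symmetric])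
  have rb2: "enn2real b \<le> card S1" using enn2real_mono[OF b2] by (simp add: less_top[symmetric])
  have L: "log 2 (enn2real a) + log 2 (enn2real b) + 2 \<le> 2 * log 2 (real (card S))"
    by (rule log_ineq) (use ra1 rb1 ra2 rb2 card in auto)
  have la: "0 \<le> log 2 (enn2real a)" using ra1 by simp
  have lb: "0 \<le> log 2 (enn2real b)" using rb1 by simp
  have "log2N a + log2N b + 2 = ennreal (log 2 (enn2real a) + log 2 (enn2real b) + 2)"
  proof -
    have e1: "ennreal (log 2 (enn2real a) + log 2 (enn2real b) + 2) = ennreal (log 2 (enn2real a) + log 2 (enn2real b)) + ennreal 2"
      by (rule ennreal_plus) (use la lb in auto)
    have e2: "ennreal (log 2 (enn2real a) + log 2 (enn2real b)) = ennreal (log 2 (enn2real a)) + ennreal (log 2 (enn2real b))"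
      by (rule ennreal_plus) (use la lb in auto)
    show ?thesis unfolding e1 e2 using ainf binf by (simp add: log2N_def)
  qed
  also have "\<dots> \<le> ennreal (2 * log 2 (real (card S)))" using L by (rule ennreal_leI)
  also have "\<dots> = 2 * log2N (covnum d q L V e)"
    using S(2) by (simp add: log2N_of_nat ennreal_mult')
  finally show ?thesis by (simp add: a_def b_def)
qed


definition Pot :: "nat \<Rightarrow> real \<Rightarrow> real \<Rightarrow> ((nat \<Rightarrow> real) \<Rightarrow> real) set \<Rightarrow> ennreal" where
  "Pot d q L V = (\<integral>\<^sup>+ e\<in>{0..1}. log2N (covnum d q L V e) \<partial>lborel)"

lemma Pot_mono: "V \<subseteq> V' \<Longrightarrow> Pot d q L V \<le> Pot d q L V'"
  unfolding Pot_def
  by (intro nn_integral_mono mult_right_mono log2N_mono covnum_mono) auto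

lemma split_pointwise:
  assumes sub: "V0 \<subseteq> V" "V1 \<subseteq> V" "V \<subseteq> HL d L" and ne: "f0 \<in> V0" "f1 \<in> V1"
    and x: "x \<in> cubeX d" and v0: "\<forall>h\<in>V0. h x = s0" and v1: "\<forall>h\<in>V1. h x = s1"
    and q: "q > 0"
  shows "log2N (covnum d q L V0 e) + log2N (covnum d q L V1 e) + 2 * indicator {..<lossq q s0 s1 / 2 powr q} e
         \<le> 2 * log2N (covnum d q L V e)"
proof (cases "e < lossq q s0 s1 / 2 powr q")
  case True
  then have "2 powr q * e < lossq q s0 s1" by (simp add: field_simps)
  then have "log2N (covnum d q L V0 e) + log2N (covnum d q L V1 e) + 2 \<le> 2 * log2N (covnum d q L V e)"
    by (intro split_pointwise_main[OF sub ne x v0 v1 q])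
  then show ?thesis using True by simp
next
  case False
  have "log2N (covnum d q L V0 e) \<le> log2N (covnum d q L V e)"
    using sub by (intro log2N_mono covnum_mono) auto
  moreover have "log2N (covnum d q L V1 e) \<le> log2N (covnum d q L V e)"
    using sub by (intro log2N_mono covnum_mono) auto
  ultimately have "log2N (covnum d q L V0 e) + log2N (covnum d q L V1 e) \<le> 2 * log2N (covnum d q L V e)"
    by (metis add_mono mult_2)
  then show ?thesis using False by simp
qed

lemma covlog_borel'[measurable]: "(\<lambda>e. log2N (covnum d q L U e)) \<in> borel_measurable lborel"
  using covlog_borel by simp

lemma split_integral:
  assumes sub: "V0 \<subseteq> V" "V1 \<subseteq> V" "V \<subseteq> HL d L" and ne: "f0 \<in> V0" "f1 \<in> V1"
    and x: "x \<in> cubeX d" and v0: "\<forall>h\<in>V0. h x = s0" and v1: "\<forall>h\<in>V1. h x = s1"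
    and q: "q > 0" and s: "0 \<le> s0" "s0 \<le> 1" "0 \<le> s1" "s1 \<le> 1"
  shows "Pot d q L V0 + Pot d q L V1 + 2 * ennreal (lossq q s0 s1 / 2 powr q) \<le> 2 * Pot d q L V"
proof -
  define c where "c = lossq q s0 s1 / 2 powr q"
  have c0: "0 \<le> c" unfolding c_def by (simp add: lossq_nonneg)
  have "lossq q s0 s1 \<le> 1" using lossq_le1 s q by blast
  moreover have "1 \<le> 2 powr q" using q by (simp add: ge_one_powr_ge_zero)
  ultimately have c1: "c \<le> 1" unfolding c_def by (simp add: divide_le_eq_1)
  define f where "f W e = log2N (covnum d q L W e)" for W e
  have [measurable]: "f W \<in> borel_measurable lborel" for W unfolding f_def by simp
  have ind: "indicator {..<c} e * indicator {0..1} e = (indicator {0..<c} e :: ennreal)" for e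
    using c1 by (auto split: split_indicator)
  have "Pot d q L V0 + Pot d q L V1 + 2 * ennreal c
      = (\<integral>\<^sup>+ e. f V0 e * indicator {0..1} e \<partial>lborel) + (\<integral>\<^sup>+ e. f V1 e * indicator {0..1} e \<partial>lborel)
        + (\<integral>\<^sup>+ e. 2 * indicator {0..<c} e \<partial>lborel)"
    using c0 by (simp add: Pot_def f_def nn_integral_cmult_indicator)
  also have "\<dots> = (\<integral>\<^sup>+ e. f V0 e * indicator {0..1} e + f V1 e * indicator {0..1} e + 2 * indicator {0..<c} e \<partial>lborel)"
    by (simp add: nn_integral_add)
  also have "\<dots> = (\<integral>\<^sup>+ e. (f V0 e + f V1 e + 2 * indicator {..<c} e) * indicator {0..1} e \<partial>lborel)"
    by (intro nn_integral_cong) (simp add: distrib_right ind mult.assoc)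
  also have "\<dots> \<le> (\<integral>\<^sup>+ e. (2 * f V e) * indicator {0..1} e \<partial>lborel)"
    by (intro nn_integral_mono mult_right_mono)
       (use split_pointwise[OF sub ne x v0 v1 q] in \<open>auto simp: f_def c_def\<close>)
  also have "\<dots> = 2 * Pot d q L V"
    by (simp add: Pot_def f_def mult.assoc nn_integral_cmult)
  finally show ?thesis unfolding c_def .
qed

lemma split_choose:
  assumes sub: "V0 \<subseteq> V" "V1 \<subseteq> V" "V \<subseteq> HL d L" and ne: "f0 \<in> V0" "f1 \<in> V1"
    and x: "x \<in> cubeX d" and v0: "\<forall>h\<in>V0. h x = s0" and v1: "\<forall>h\<in>V1. h x = s1"
    and q: "q > 0" and s: "0 \<le> s0" "s0 \<le> 1" "0 \<le> s1" "s1 \<le> 1"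
  shows "min (Pot d q L V0) (Pot d q L V1) + ennreal (lossq q s0 s1 / 2 powr q) \<le> Pot d q L V"
proof -
  let ?m = "min (Pot d q L V0) (Pot d q L V1)"
  let ?c = "ennreal (lossq q s0 s1 / 2 powr q)"
  have "2 * (?m + ?c) = ?m + ?m + 2 * ?c" by (simp add: distrib_left mult_2)
  also have "\<dots> \<le> Pot d q L V0 + Pot d q L V1 + 2 * ?c"
    by (intro add_mono) auto
  also have "\<dots> \<le> 2 * Pot d q L V" by (rule split_integral[OF assms])
  finally have "2 * (?m + ?c) \<le> 2 * Pot d q L V" .
  then show ?thesis using ennreal_mult_le_mult_iff[of 2 "?m + ?c" "Pot d q L V"] by simp
qed

definition Vs where
  "Vs d L xl sl u = {h \<in> HL d L. \<forall>t<length u. h (xl (take t u)) = sl (take t u) (u ! t)}"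

lemma Vs_Nil: "Vs d L xl sl [] = HL d L"
  by (simp add: Vs_def)

lemma Vs_sub: "Vs d L xl sl u \<subseteq> HL d L"
  by (auto simp: Vs_def)

lemma Vs_snoc: "Vs d L xl sl (u @ [c]) = {h \<in> Vs d L xl sl u. h (xl u) = sl u c}"
  by (auto simp: Vs_def nth_append less_Suc_eq)

lemma map_prefix:
  assumes "\<And>i. i < length u \<Longrightarrow> b i = u ! i" "t \<le> length u"
  shows "map b [0..<t] = take t u"
  by (rule nth_equalityI) (use assms in auto)

lemma Vs_ne:
  assumes R: "realizable_tree d L D xl sl" and lt: "enat (length u) < D"
  shows "\<exists>h. h \<in> Vs d L xl sl (u @ [c])"
proof -
  define b where "b t = (u @ [c]) ! t" for t
  have le: "enat (Suc (length u)) \<le> D" using lt by (simp add: Suc_ile_eq)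
  obtain h where h: "h \<in> HL d L" "\<forall>t<Suc (length u). h (xl (map b [0..<t])) = sl (map b [0..<t]) (b t)"
    using R le unfolding realizable_tree_def by blast
  have mp: "map b [0..<t] = take t (u @ [c])" if "t < Suc (length u)" for t
    by (rule map_prefix) (use that in \<open>auto simp: b_def\<close>)
  have "h \<in> Vs d L xl sl (u @ [c])"
    unfolding Vs_def using h mp by (auto simp: b_def)
  then show ?thesis by blast
qed

definition gg where
  "gg q D sl u = (if enat (length u) < D then ennreal (lossq q (sl u False) (sl u True) / 2 powr q) else 0)"

lemma step:
  assumes R: "realizable_tree d L D xl sl" and q: "q > 0"
  shows "\<exists>c. Pot d q L (Vs d L xl sl (u @ [c])) + gg q D sl u \<le> Pot d q L (Vs d L xl sl u)"
proof (cases "enat (length u) < D")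
  case False
  have "Pot d q L (Vs d L xl sl (u @ [False])) \<le> Pot d q L (Vs d L xl sl u)"
    by (rule Pot_mono) (auto simp: Vs_snoc)
  then show ?thesis using False by (auto simp: gg_def)
next
  case True
  have tr: "xl u \<in> cubeX d" "sl u False \<in> {0..1}" "sl u True \<in> {0..1}"
    using R True unfolding realizable_tree_def by auto
  obtain f0 where f0: "f0 \<in> Vs d L xl sl (u @ [False])" using Vs_ne[OF R True] by blast
  obtain f1 where f1: "f1 \<in> Vs d L xl sl (u @ [True])" using Vs_ne[OF R True] by blast
  have m: "min (Pot d q L (Vs d L xl sl (u @ [False]))) (Pot d q L (Vs d L xl sl (u @ [True])))
        + ennreal (lossq q (sl u False) (sl u True) / 2 powr q) \<le> Pot d q L (Vs d L xl sl u)"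
    by (rule split_choose[OF _ _ Vs_sub f0 f1 tr(1)]) (use tr q in \<open>auto simp: Vs_snoc\<close>)
  show ?thesis
  proof (cases "Pot d q L (Vs d L xl sl (u @ [False])) \<le> Pot d q L (Vs d L xl sl (u @ [True]))")
    case c: True
    show ?thesis by (rule exI[of _ False]) (use m c True in \<open>simp add: gg_def min_def\<close>)
  next
    case c: False
    show ?thesis by (rule exI[of _ True]) (use m c True in \<open>simp add: gg_def min_def\<close>)
  qed
qed

primrec usq :: "(bool list \<Rightarrow> bool) \<Rightarrow> nat \<Rightarrow> bool list" where
  "usq f 0 = []"
| "usq f (Suc n) = usq f n @ [f (usq f n)]"

lemma usq_map: "usq f n = map (\<lambda>t. f (usq f t)) [0..<n]"
  by (induction n) auto

lemma length_usq[simp]: "length (usq f n) = n"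
  by (induction n) auto

lemma Donl_tree:
  assumes R: "realizable_tree d L D xl sl" and q: "q > 0"
  shows "(INF b. branch_gap q D sl b) \<le> ennreal (2 powr q) * Pot d q L (HL d L)"
proof -
  define nxt where "nxt u = (SOME c. Pot d q L (Vs d L xl sl (u @ [c])) + gg q D sl u \<le> Pot d q L (Vs d L xl sl u))" for u
  have nxt: "Pot d q L (Vs d L xl sl (u @ [nxt u])) + gg q D sl u \<le> Pot d q L (Vs d L xl sl u)" for u
    unfolding nxt_def by (rule someI_ex) (rule step[OF R q])
  define b where "b t = nxt (usq nxt t)" for t
  have ub: "map b [0..<t] = usq nxt t" for t
    unfolding b_def by (simp add: usq_map[of nxt t])
  have ind: "(\<Sum>t<n. gg q D sl (usq nxt t)) + Pot d q L (Vs d L xl sl (usq nxt n)) \<le> Pot d q L (HL d L)" for n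
  proof (induction n)
    case 0 then show ?case by (simp add: Vs_Nil)
  next
    case (Suc n)
    have "(\<Sum>t<Suc n. gg q D sl (usq nxt t)) + Pot d q L (Vs d L xl sl (usq nxt (Suc n)))
        = (\<Sum>t<n. gg q D sl (usq nxt t)) + (Pot d q L (Vs d L xl sl (usq nxt n @ [nxt (usq nxt n)])) + gg q D sl (usq nxt n))"
      by (simp add: add_ac)
    also have "\<dots> \<le> (\<Sum>t<n. gg q D sl (usq nxt t)) + Pot d q L (Vs d L xl sl (usq nxt n))"
      by (intro add_left_mono nxt)
    also have "\<dots> \<le> Pot d q L (HL d L)" by (rule Suc.IH)
    finally show ?case .
  qed
  have sumle: "(\<Sum>t. gg q D sl (usq nxt t)) \<le> Pot d q L (HL d L)"
  proof (rule suminf_le_const)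
    show "summable (\<lambda>t. gg q D sl (usq nxt t))" by simp
    fix n show "sum (\<lambda>t. gg q D sl (usq nxt t)) {..<n} \<le> Pot d q L (HL d L)"
      using ind[of n] by (metis add_increasing2 le_iff_add zero_le order_trans)
  qed
  have trm: "(if enat t < D then ennreal (lossq q (sl (map b [0..<t]) False) (sl (map b [0..<t]) True)) else 0)
      = ennreal (2 powr q) * gg q D sl (usq nxt t)" for t
  proof -
    have "ennreal (2 powr q) * ennreal (lossq q s0 s1 / 2 powr q) = ennreal (lossq q s0 s1)" for s0 s1
      by (simp add: ennreal_mult[symmetric] lossq_nonneg)
    then show ?thesis by (simp add: ub gg_def)
  qed
  have "branch_gap q D sl b = ennreal (2 powr q) * (\<Sum>t. gg q D sl (usq nxt t))"
    unfolding branch_gap_def trm by simp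
  also have "\<dots> \<le> ennreal (2 powr q) * Pot d q L (HL d L)"
    by (intro mult_left_mono sumle) simp
  finally show ?thesis by (metis INF_lower2 UNIV_I)
qed

lemma Donl_le:
  assumes q: "q > 0"
  shows "Donl d q L \<le> ennreal (2 powr q) * Pot d q L (HL d L)"
  unfolding Donl_def
  by (rule SUP_least) (auto intro: Donl_tree[OF _ q])


lemma linf_le:
  assumes "d \<ge> 1" "\<And>i. i < d \<Longrightarrow> \<bar>x i - y i\<bar> \<le> r"
  shows "linf d x y \<le> r"
proof -
  have "0 \<in> {..<d}" using assms(1) by simp
  then have "{..<d} \<noteq> {}" by blast
  then show ?thesis unfolding linf_def using assms by (subst Max_le_iff) auto
qed

lemma floor_same:
  fixes a b :: real
  assumes "0 \<le> a" "0 \<le> b" "nat \<lfloor>a\<rfloor> = nat \<lfloor>b\<rfloor>"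
  shows "\<bar>a - b\<bar> < 1"
proof -
  have "\<lfloor>a\<rfloor> = \<lfloor>b\<rfloor>" using assms by (simp add: nat_eq_iff2)
  then show ?thesis by linarith
qed

lemma cover_bound:
  fixes d :: nat and L q e :: real
  assumes d: "d \<ge> 1" and L: "L \<ge> 1" and q: "q > 0" and e: "0 < e" "e \<le> 1"
  defines "\<delta> \<equiv> e powr (1/q)"
  defines "m \<equiv> nat \<lceil>3 * L / \<delta>\<rceil>"
  defines "K \<equiv> nat \<lfloor>3 / \<delta>\<rfloor>"
  shows "covnum d q L (HL d L) e \<le> of_nat ((K + 1) ^ ((m + 1) ^ d))"
proof -
  have \<delta>0: "0 < \<delta>" unfolding \<delta>_def using e by simp
  have \<delta>1: "\<delta> \<le> 1" unfolding \<delta>_def using e q powr_mono2[of "1/q" e 1] by simp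
  have \<delta>q: "\<delta> powr q = e" unfolding \<delta>_def using e q by (simp add: powr_powr)
  have m3: "3 * L / \<delta> \<le> real m" unfolding m_def by linarith
  have Lpos: "0 < 3 * L / \<delta>" using L \<delta>0 by simp
  have mpos: "0 < real m" using m3 Lpos by linarith
  have Lm: "L / real m \<le> \<delta> / 3"
    using m3 mpos \<delta>0 L by (simp add: field_simps)
  define I where "I = PiE {..<d} (\<lambda>_. {0..m})"
  define gp where "gp k = (\<lambda>i. if i < d then -1 + 2 * real (k i) / real m else 0)" for k :: "nat \<Rightarrow> nat"
  have gpX: "gp k \<in> cubeX d" if "k \<in> I" for k
  proof -
    have "k i \<le> m" if "i < d" for i using \<open>k \<in> I\<close> that by (auto simp: I_def PiE_def Pi_def)
    then have "real (k i) \<le> real m" if "i < d" for i using that by simp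
    then have "2 * real (k i) / real m \<le> 2" if "i < d" for i using that mpos by (simp add: field_simps)
    moreover have "0 \<le> 2 * real (k i) / real m" for i using mpos by simp
    ultimately show ?thesis unfolding cubeX_def gp_def by auto
  qed
  define pat where "pat h = restrict (\<lambda>k. nat \<lfloor>h (gp k) * 3 / \<delta>\<rfloor>) I" for h :: "(nat \<Rightarrow> real) \<Rightarrow> real"
  define P where "P = PiE I (\<lambda>_. {0..K})"
  have finI: "finite I" unfolding I_def by (simp add: finite_PiE)
  have cardI: "card I = (m + 1) ^ d" unfolding I_def by (simp add: card_PiE)
  have finP: "finite P" unfolding P_def using finI by (simp add: finite_PiE)
  have cardP: "card P = (K + 1) ^ ((m + 1) ^ d)" unfolding P_def using finI cardI by (simp add: card_PiE)
  have patP: "pat h \<in> P" if "h \<in> HL d L" for h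
  proof -
    have "nat \<lfloor>h (gp k) * 3 / \<delta>\<rfloor> \<le> K" if "k \<in> I" for k
    proof -
      have "h (gp k) \<le> 1" using HL_vals[OF \<open>h \<in> HL d L\<close> gpX[OF that]] by simp
      then have "h (gp k) * 3 / \<delta> \<le> 3 / \<delta>" using \<delta>0 by (simp add: divide_right_mono)
      then show ?thesis unfolding K_def by (intro nat_mono floor_mono)
    qed
    then show ?thesis unfolding P_def pat_def by auto
  qed
  define ch where "ch p = (SOME h. h \<in> HL d L \<and> pat h = p)" for p
  define S where "S = ch ` pat ` HL d L"
  have ch: "ch (pat h) \<in> HL d L \<and> pat (ch (pat h)) = pat h" if "h \<in> HL d L" for h
    unfolding ch_def by (rule someI[of _ h]) (use that in auto)
  have cov: "iscov d q L (HL d L) e S"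
    unfolding iscov_def
  proof (intro conjI ballI)
    show "finite S" unfolding S_def using patP finP by (meson finite_imageI finite_subset image_subsetI)
    show "S \<subseteq> HL d L" unfolding S_def using ch by auto
    fix h assume h: "h \<in> HL d L"
    define c where "c = ch (pat h)"
    have c: "c \<in> HL d L" "pat c = pat h" using ch[OF h] by (auto simp: c_def)
    have "dl d q h c \<le> e"
    proof (rule dl_le)
      fix x assume x: "x \<in> cubeX d"
      define k where "k i = (if i < d then nat (round ((x i + 1) * real m / 2)) else undefined)" for i
      have xi: "-1 \<le> x i" "x i \<le> 1" if "i < d" for i using x that by (auto simp: cubeX_def)
      have kI: "k \<in> I"
      proof -
        have "k i \<le> m" if "i < d" for i
        proof -
          have "(x i + 1) * real m / 2 \<le> real m" using xi[OF that] mpos by (simp add: field_simps)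
          then have "round ((x i + 1) * real m / 2) \<le> round (real m)" by (rule round_mono)
          then show ?thesis unfolding k_def using that by simp
        qed
        then show ?thesis unfolding I_def k_def by (auto simp: PiE_iff extensional_def)
      qed
      have near: "\<bar>x i - gp k i\<bar> \<le> 1 / real m" if "i < d" for i
      proof -
        define y where "y = (x i + 1) * real m / 2"
        have y0: "0 \<le> y" unfolding y_def using xi[OF that] mpos by simp
        have r0: "0 \<le> round y" using y0 by (metis round_0 round_mono of_int_0 round_of_int)
        have "real (k i) = of_int (round y)" unfolding k_def y_def using that r0 y_def by simp
        then have gpi: "gp k i = -1 + 2 * of_int (round y) / real m" unfolding gp_def using that by simp
        have xiy: "x i = -1 + 2 * y / real m" unfolding y_def using mpos by (simp add: field_simps)
        have df: "x i - gp k i = 2 * (y - of_int (round y)) / real m"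
          unfolding gpi xiy using mpos by (simp add: diff_divide_distrib right_diff_distrib)
        have "\<bar>x i - gp k i\<bar> = 2 * \<bar>y - of_int (round y)\<bar> / real m"
          unfolding df by (simp only: abs_divide abs_mult abs_of_pos[OF mpos] abs_numeral)
        also have "\<dots> \<le> 2 * (1/2) / real m"
          using of_int_round_abs_le[of y] mpos by (intro divide_right_mono mult_left_mono) (auto simp: abs_minus_commute)
        finally show ?thesis by simp
      qed
      have g: "gp k \<in> cubeX d" by (rule gpX[OF kI])
      have lin: "linf d x (gp k) \<le> 1 / real m" by (rule linf_le[OF d near])
      have lip: "\<bar>f x - f (gp k)\<bar> \<le> \<delta> / 3" if "f \<in> HL d L" for f
      proof -
        have "\<bar>f x - f (gp k)\<bar> \<le> L * linf d x (gp k)" using that x g by (auto simp: HL_def)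
        also have "\<dots> \<le> L * (1 / real m)" using lin L by (intro mult_left_mono) auto
        finally have "\<bar>f x - f (gp k)\<bar> \<le> L / real m" by simp
        then show ?thesis using Lm by linarith
      qed
      have same: "\<bar>h (gp k) - c (gp k)\<bar> \<le> \<delta> / 3"
      proof -
        have "nat \<lfloor>h (gp k) * 3 / \<delta>\<rfloor> = nat \<lfloor>c (gp k) * 3 / \<delta>\<rfloor>"
          using fun_cong[OF c(2), of k] kI by (simp add: pat_def)
        then have "\<bar>h (gp k) * 3 / \<delta> - c (gp k) * 3 / \<delta>\<bar> < 1"
          by (intro floor_same) (use HL_vals[OF h g] HL_vals[OF c(1) g] \<delta>0 in auto)
        moreover have "h (gp k) * 3 / \<delta> - c (gp k) * 3 / \<delta> = (h (gp k) - c (gp k)) * 3 / \<delta>"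
          by (simp add: diff_divide_distrib left_diff_distrib)
        ultimately have "\<bar>(h (gp k) - c (gp k)) * 3 / \<delta>\<bar> < 1" by simp
        then have "\<bar>h (gp k) - c (gp k)\<bar> * 3 / \<delta> < 1"
          by (simp only: abs_divide abs_mult abs_of_pos[OF \<delta>0] abs_numeral)
        then show ?thesis using \<delta>0 by (simp add: field_simps)
      qed
      have "\<bar>h x - c x\<bar> \<le> \<delta>"
        using lip[OF h] lip[OF c(1)] same by linarith
      then have "\<bar>h x - c x\<bar> powr q \<le> \<delta> powr q" by (intro powr_mono2) (use q in auto)
      then show "lossq q (h x) (c x) \<le> e" using \<delta>q by (simp add: lossq_def)
    qed
    moreover have "c \<in> S" unfolding S_def c_def using h by blast
    ultimately show "\<exists>s\<in>S. dl d q h s \<le> e" by blast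
  qed
  have "card S \<le> card (pat ` HL d L)" unfolding S_def
    by (rule card_image_le) (use patP finP in \<open>meson finite_imageI finite_subset image_subsetI\<close>)
  also have "\<dots> \<le> card P" using patP finP by (intro card_mono) auto
  finally have "card S \<le> (K + 1) ^ ((m + 1) ^ d)" using cardP by simp
  then have "(of_nat (card S) :: ennreal) \<le> of_nat ((K + 1) ^ ((m + 1) ^ d))"
    by (rule of_nat_mono)
  then show ?thesis by (rule order_trans[OF covnum_le[OF cov]])
qed


lemma ln_powr_bound:
  fixes y \<eta> :: real
  assumes "y > 0" "\<eta> > 0"
  shows "ln y \<le> y powr \<eta> / \<eta>"
proof -
  have "ln (y powr \<eta>) \<le> y powr \<eta> - 1" using assms by (intro ln_le_minus_one) simp
  then have "\<eta> * ln y \<le> y powr \<eta>" using assms by (simp add: ln_powr)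
  then show ?thesis using assms by (simp add: field_simps)
qed

lemma real_bound:
  fixes d :: nat and L q e :: real
  assumes d: "d \<ge> 1" and L: "L \<ge> 1" and q: "q > real d" and e: "0 < e" "e \<le> 1"
  defines "\<delta> \<equiv> e powr (1/q)"
  defines "m \<equiv> nat \<lceil>3 * L / \<delta>\<rceil>"
  defines "K \<equiv> nat \<lfloor>3 / \<delta>\<rfloor>"
  defines "\<eta> \<equiv> (q - real d) / 2"
  defines "K0 \<equiv> 5 ^ d * 4 powr \<eta> / (\<eta> * ln 2)"
  shows "log 2 (real ((K + 1) ^ ((m + 1) ^ d))) \<le> K0 * L ^ d * e powr (- ((real d + \<eta>) / q))"
proof -
  have q0: "q > 0" using q d by linarith
  have \<eta>0: "\<eta> > 0" unfolding \<eta>_def using q by simp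
  have \<delta>0: "0 < \<delta>" unfolding \<delta>_def using e by simp
  have \<delta>1: "\<delta> \<le> 1" unfolding \<delta>_def using e q0 powr_mono2[of "1/q" e 1] by simp
  have Ld: "1 \<le> L / \<delta>" using L \<delta>0 \<delta>1 by (simp add: field_simps)
  have id: "1 \<le> 1 / \<delta>" using \<delta>0 \<delta>1 by (simp add: field_simps)
  have p: "0 < 3 * L / \<delta>" using L \<delta>0 by simp
  have c0: "0 \<le> \<lceil>3 * L / \<delta>\<rceil>" by (subst zero_le_ceiling) (use p in linarith)
  have "real m = of_int \<lceil>3 * L / \<delta>\<rceil>" unfolding m_def using c0 by simp
  then have "real m \<le> 3 * L / \<delta> + 1" using of_int_ceiling_le_add_one[of "3 * L / \<delta>"] by simp
  then have m5: "real m + 1 \<le> 5 * (L / \<delta>)" using Ld by simp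
  have "real K \<le> 3 / \<delta>" unfolding K_def using \<delta>0 by simp
  then have K4: "real K + 1 \<le> 4 / \<delta>" using id by simp
  have "log 2 (real ((K + 1) ^ ((m + 1) ^ d))) = (real m + 1) ^ d * log 2 (real K + 1)"
    by (simp add: log_nat_power add.commute)
  also have "\<dots> \<le> (5 * (L / \<delta>)) ^ d * (ln (4 / \<delta>) / ln 2)"
  proof (rule mult_mono)
    show "(real m + 1) ^ d \<le> (5 * (L / \<delta>)) ^ d" using m5 by (intro power_mono) auto
    have "log 2 (real K + 1) \<le> log 2 (4 / \<delta>)" using K4 \<delta>0 by (subst log_le_cancel_iff) auto
    then show "log 2 (real K + 1) \<le> ln (4 / \<delta>) / ln 2" by (simp add: log_def)
    show "0 \<le> (5 * (L / \<delta>)) ^ d" using L \<delta>0 by simp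
    show "0 \<le> log 2 (real K + 1)" by simp
  qed
  also have "\<dots> \<le> (5 * (L / \<delta>)) ^ d * ((4 / \<delta>) powr \<eta> / \<eta> / ln 2)"
    using ln_powr_bound[of "4 / \<delta>" \<eta>] \<delta>0 \<eta>0 L
    by (intro mult_left_mono divide_right_mono) auto
  also have "\<dots> = K0 * L ^ d * (\<delta> powr (- real d) * \<delta> powr (- \<eta>))"
  proof -
    have "(5 * (L / \<delta>)) ^ d = 5 ^ d * L ^ d * \<delta> powr (- real d)"
      using \<delta>0 by (simp add: power_mult_distrib power_divide powr_minus_divide powr_realpow divide_inverse power_inverse)
    moreover have "(4 / \<delta>) powr \<eta> = 4 powr \<eta> * \<delta> powr (- \<eta>)"
      using \<delta>0 by (simp add: powr_divide powr_minus_divide)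
    ultimately show ?thesis unfolding K0_def by (simp add: field_simps)
  qed
  also have "\<delta> powr (- real d) * \<delta> powr (- \<eta>) = e powr (- ((real d + \<eta>) / q))"
  proof -
    have "(- \<eta> - real d) / q = - ((real d + \<eta>) / q)" using q0 by (simp add: field_simps)
    moreover have "- (real d / q) - \<eta> / q = - ((real d + \<eta>) / q)" using q0 by (simp add: field_simps)
    ultimately show ?thesis unfolding \<delta>_def using e q0 by (simp add: powr_add[symmetric] powr_powr)
  qed
  finally show ?thesis .
qed

lemma Pot_bound:
  fixes d :: nat and L q :: real
  assumes d: "d \<ge> 1" and L: "L \<ge> 1" and q: "q > real d"
  defines "\<eta> \<equiv> (q - real d) / 2"
  defines "\<beta> \<equiv> (real d + \<eta>) / q"
  defines "K0 \<equiv> 5 ^ d * 4 powr \<eta> / (\<eta> * ln 2)"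
  shows "Pot d q L (HL d L) \<le> ennreal (K0 / (1 - \<beta>) * L ^ d)"
proof -
  have q0: "q > 0" using q d by linarith
  have \<eta>0: "\<eta> > 0" unfolding \<eta>_def using q by simp
  have \<beta>1: "\<beta> < 1" unfolding \<beta>_def \<eta>_def using q0 q by (simp add: field_simps)
  have K00: "0 \<le> K0" unfolding K0_def using \<eta>0 by simp
  have pw: "log2N (covnum d q L (HL d L) e) \<le> ennreal (K0 * L ^ d * e powr (- \<beta>))"
    if e: "0 < e" "e \<le> 1" for e
  proof -
    let ?N = "(nat \<lfloor>3 / e powr (1/q)\<rfloor> + 1) ^ ((nat \<lceil>3 * L / e powr (1/q)\<rceil> + 1) ^ d)"
    have "log2N (covnum d q L (HL d L) e) \<le> log2N (of_nat ?N)"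
      by (intro log2N_mono cover_bound[OF d L q0 e])
    also have "\<dots> = ennreal (log 2 (real ?N))" by (rule log2N_of_nat)
    also have "\<dots> \<le> ennreal (K0 * L ^ d * e powr (- \<beta>))"
      using real_bound[OF d L q e] unfolding K0_def \<beta>_def \<eta>_def by (intro ennreal_leI) simp
    finally show ?thesis .
  qed
  have "Pot d q L (HL d L) \<le> (\<integral>\<^sup>+ e. ennreal (K0 * L ^ d * e powr (- \<beta>)) * indicator {0..1} e \<partial>lborel)"
    unfolding Pot_def
  proof (rule nn_integral_mono_AE)
    show "AE e in lborel. log2N (covnum d q L (HL d L) e) * indicator {0..1} e
              \<le> ennreal (K0 * L ^ d * e powr - \<beta>) * indicator {0..1} e"
      using AE_lborel_singleton[of 0]
    proof eventually_elim
      case (elim e)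
      then show ?case using pw[of e] by (cases "e \<in> {0..1}") auto
    qed
  qed
  also have "\<dots> = ennreal (K0 * L ^ d * (1 powr (- \<beta> + 1) / (- \<beta> + 1)))"
  proof (rule nn_integral_has_integral_lebesgue')
    show "((\<lambda>e. K0 * L ^ d * e powr (- \<beta>)) has_integral (K0 * L ^ d * (1 powr (- \<beta> + 1) / (- \<beta> + 1)))) {0..1}"
      by (rule has_integral_mult_right, rule has_integral_powr_from_0) (use \<beta>1 in auto)
    show "\<And>x. x \<in> {0..1} \<Longrightarrow> 0 \<le> K0 * L ^ d * x powr - \<beta>"
      using K00 L by simp
  qed
  also have "\<dots> = ennreal (K0 / (1 - \<beta>) * L ^ d)" by simp
  finally show ?thesis .
qed

theorem theoremA2:
  fixes d :: nat and q :: real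
  assumes "d \<ge> 1" and "q > real d"
  shows "\<exists>C::real. \<forall>L::real. L \<ge> 1 \<longrightarrow>
           Phi d q L (HL d L) \<le> ennreal (C * L ^ d)
         \<and> Donl d q L \<le> ennreal (4 * 2 powr (q - 1) * C * L ^ d)"
proof -
  define \<eta> where "\<eta> = (q - real d) / 2"
  define \<beta> where "\<beta> = (real d + \<eta>) / q"
  define K0 where "K0 = 5 ^ d * 4 powr \<eta> / (\<eta> * ln 2)"
  define C where "C = K0 / (1 - \<beta>)"
  have q0: "q > 0" using assms by linarith
  have \<eta>0: "\<eta> > 0" unfolding \<eta>_def using assms by simp
  have \<beta>1: "\<beta> < 1" unfolding \<beta>_def \<eta>_def using q0 assms by (simp add: field_simps)
  have C0: "0 \<le> C" unfolding C_def K0_def using \<eta>0 \<beta>1 by simp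
  show ?thesis
  proof (intro exI allI impI conjI)
    fix L :: real assume L: "L \<ge> 1"
    have PB: "Pot d q L (HL d L) \<le> ennreal (C * L ^ d)"
      using Pot_bound[OF assms(1) L assms(2)] unfolding C_def K0_def \<beta>_def \<eta>_def by simp
    have "Phi d q L (HL d L) = Pot d q L (HL d L)"
      unfolding Phi_def Pot_def using diamH_eq[OF assms(1) _ q0, of L] L by simp
    then show "Phi d q L (HL d L) \<le> ennreal (C * L ^ d)" using PB by simp
    have "Donl d q L \<le> ennreal (2 powr q) * Pot d q L (HL d L)" by (rule Donl_le[OF q0])
    also have "\<dots> \<le> ennreal (2 powr q) * ennreal (C * L ^ d)" by (intro mult_left_mono PB) simp
    also have "\<dots> = ennreal (2 powr q * (C * L ^ d))" by (rule ennreal_mult'[symmetric]) simp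
    also have "\<dots> \<le> ennreal (4 * 2 powr (q - 1) * C * L ^ d)"
    proof (rule ennreal_leI)
      have h: "2 powr (q - 1) = 2 powr q / 2" by (simp add: powr_diff)
      have e: "4 * 2 powr (q - 1) * C * L ^ d = 2 * (2 powr q * (C * L ^ d))" unfolding h by simp
      have "0 \<le> 2 powr q * (C * L ^ d)" using C0 L by simp
      then show "2 powr q * (C * L ^ d) \<le> 4 * 2 powr (q - 1) * C * L ^ d" unfolding e by linarith
    qed
    finally show "Donl d q L \<le> ennreal (4 * 2 powr (q - 1) * C * L ^ d)" .
  qed
qed

end
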